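(* For $n\ge2$, $R>1$ and $s\in(0,\tfrac12)$ there exist explicit $\delta,C>0$ depending only on $n,R,s$ such that the following holds. If $\sigma\subseteq\mathbb R^n$ is a convex cone with $r(\sigma\cap B_2^n)\ge s$, and $E,E'\subseteq\mathbb R^n$ are origin-symmetric ellipsoids with $\frac1RB_2^n\subseteq E,E'\subseteq RB_2^n$ and $|(E\Delta E')\cap\sigma|\le\delta$, then $$|E\Delta E'|\le C\,|(E\Delta E')\cap\sigma|.$$
   Context: $r(\cdot)$ denotes the inradius (maximal radius of a Euclidean ball contained in the set), $B_2^n$ the Euclidean unit ball, $|\cdot|$ Lebesgue measure, $\Delta$ symmetric difference. A convex cone here has apex at the origin. *)

theory Defs
  imports "HOL-Analysis.Analysis"
begin

definition inradius :: "'a::euclidean_space set \<Rightarrow> real" where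
  "inradius S = Sup {r. 0 \<le> r \<and> (\<exists>x. cball x r \<subseteq> S)}"

definition sym_ellipsoid :: "'a::euclidean_space set \<Rightarrow> bool" where
  "sym_ellipsoid S \<longleftrightarrow> (\<exists>T::'a \<Rightarrow> 'a. linear T \<and> inj T \<and> S = T ` cball 0 1)"

definition symdiff :: "'a set \<Rightarrow> 'a set \<Rightarrow> 'a set" where
  "symdiff A B = (A - B) \<union> (B - A)"

end

theory Submission
  imports Defs
begin

lemma ell_repr:
  fixes E :: "'a::euclidean_space set"
  assumes "sym_ellipsoid E"
  shows "\<exists>S::'a\<Rightarrow>'a. linear S \<and> E = {x. norm (S x) \<le> 1}"
proof -
  obtain T :: "'a \<Rightarrow> 'a" where T: "linear T" "inj T" "E = T ` cball 0 1"
    using assms unfolding sym_ellipsoid_def by blast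
  obtain g where g: "linear g" "g \<circ> T = id"
    using linear_injective_left_inverse[OF T(1) T(2)] by blast
  have gT: "g (T y) = y" for y using g(2) by (metis comp_apply id_apply)
  have "surj T" using linear_injective_imp_surjective[OF T(1) T(2)] by simp
  then have Tg: "T (g x) = x" for x by (metis gT surjD)
  have "E = {x. norm (g x) \<le> 1}"
    unfolding T(3) by (auto simp: gT) (metis Tg imageI mem_cball_0)
  with g show ?thesis by blast
qed



definition qf :: "('a::euclidean_space \<Rightarrow> 'a) \<Rightarrow> ('a \<Rightarrow> 'a) \<Rightarrow> 'a \<Rightarrow> real" where
  "qf S1 S2 x = (norm (S1 x))\<^sup>2 - (norm (S2 x))\<^sup>2"
definition bf :: "('a::euclidean_space \<Rightarrow> 'a) \<Rightarrow> ('a \<Rightarrow> 'a) \<Rightarrow> 'a \<Rightarrow> 'a \<Rightarrow> real" where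
  "bf S1 S2 x y = S1 x \<bullet> S1 y - S2 x \<bullet> S2 y"

lemma qf_scale:
  assumes "linear S1" "linear S2"
  shows "qf S1 S2 (c *\<^sub>R x) = c\<^sup>2 * qf S1 S2 x"
  using assms by (simp add: qf_def linear_cmul power_mult_distrib algebra_simps)

lemma qf_add:
  assumes "linear S1" "linear S2"
  shows "qf S1 S2 (x + y) = qf S1 S2 x + 2 * bf S1 S2 x y + qf S1 S2 y"
  using assms by (simp add: qf_def bf_def linear_add power2_norm_eq_inner inner_add inner_commute algebra_simps)

lemma qf_diff:
  assumes "linear S1" "linear S2"
  shows "qf S1 S2 (x - y) = qf S1 S2 x - 2 * bf S1 S2 x y + qf S1 S2 y"
  using assms by (simp add: qf_def bf_def linear_diff power2_norm_eq_inner inner_diff inner_commute algebra_simps)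

lemma bf_scale:
  assumes "linear S1" "linear S2"
  shows "bf S1 S2 (c *\<^sub>R x) (d *\<^sub>R y) = c * d * bf S1 S2 x y"
  using assms by (simp add: bf_def linear_cmul algebra_simps)

lemma qf_bound:
  assumes "linear S1" "linear S2" "\<And>u. norm u = 1 \<Longrightarrow> \<bar>qf S1 S2 u\<bar> \<le> M"
  shows "\<bar>qf S1 S2 x\<bar> \<le> M * (norm x)\<^sup>2"
proof (cases "x = 0")
  case True then show ?thesis using assms(1,2) by (simp add: qf_def linear_0)
next
  case False
  define u where "u = (1 / norm x) *\<^sub>R x"
  have nu: "norm u = 1" using False by (simp add: u_def)
  have x: "x = norm x *\<^sub>R u" using False by (simp add: u_def)
  have "qf S1 S2 x = (norm x)\<^sup>2 * qf S1 S2 u" by (subst x, rule qf_scale[OF assms(1,2)])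
  then have "\<bar>qf S1 S2 x\<bar> = (norm x)\<^sup>2 * \<bar>qf S1 S2 u\<bar>" by (simp add: abs_mult)
  also have "\<dots> \<le> (norm x)\<^sup>2 * M" using assms(3)[OF nu] by (simp add: mult_left_mono)
  finally show ?thesis by (simp add: mult.commute)
qed

lemma four_bound:
  fixes A B a c bb M :: real
  assumes h: "4 * bb = A - B" "\<bar>A\<bar> \<le> M * a" "\<bar>B\<bar> \<le> M * c" "a + c = 4"
  shows "4 * \<bar>bb\<bar> \<le> 4 * M"
proof -
  have "M * a + M * c = 4 * M" using h(4) by (simp add: distrib_left[symmetric])
  then show ?thesis using h(1-3) by linarith
qed

lemma bf_bound:
  assumes "linear S1" "linear S2" "\<And>u. norm u = 1 \<Longrightarrow> \<bar>qf S1 S2 u\<bar> \<le> M"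
  shows "\<bar>bf S1 S2 x y\<bar> \<le> M * norm x * norm y"
proof (cases "x = 0 \<or> y = 0")
  case True then show ?thesis using assms(1,2) by (auto simp: bf_def linear_0)
next
  case False
  define u where "u = (1 / norm x) *\<^sub>R x"
  define w where "w = (1 / norm y) *\<^sub>R y"
  have nu: "norm u = 1" "norm w = 1" using False by (auto simp: u_def w_def)
  have x: "x = norm x *\<^sub>R u" "y = norm y *\<^sub>R w" using False by (auto simp: u_def w_def)
  have e: "bf S1 S2 x y = norm x * norm y * bf S1 S2 u w"
    by (subst x(1), subst x(2), rule bf_scale[OF assms(1,2)])
  have M0: "M \<ge> 0" using assms(3)[OF nu(1)] by simp
  have "4 * bf S1 S2 u w = qf S1 S2 (u + w) - qf S1 S2 (u - w)"
    using qf_add[OF assms(1,2)] qf_diff[OF assms(1,2)] by simp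
  moreover have "\<bar>qf S1 S2 (u + w)\<bar> \<le> M * (norm (u+w))\<^sup>2" by (rule qf_bound[OF assms])
  moreover have "\<bar>qf S1 S2 (u - w)\<bar> \<le> M * (norm (u-w))\<^sup>2" by (rule qf_bound[OF assms])
  moreover have "(norm (u+w))\<^sup>2 + (norm (u-w))\<^sup>2 = 4"
  proof -
    have uu: "u \<bullet> u = 1" "w \<bullet> w = 1" using nu power2_norm_eq_inner[of u] power2_norm_eq_inner[of w] by simp_all
    have "(norm (u+w))\<^sup>2 = u \<bullet> u + 2 * (u \<bullet> w) + w \<bullet> w"
      by (simp only: power2_norm_eq_inner inner_add_left inner_add_right inner_commute[of w u])
    moreover have "(norm (u-w))\<^sup>2 = u \<bullet> u - 2 * (u \<bullet> w) + w \<bullet> w"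
      by (simp only: power2_norm_eq_inner inner_diff_left inner_diff_right inner_commute[of w u])
    ultimately show ?thesis using uu by simp
  qed
  ultimately have "4 * \<bar>bf S1 S2 u w\<bar> \<le> 4 * M"
    by (rule four_bound)
  then have "\<bar>bf S1 S2 u w\<bar> \<le> M" by simp
  then have "norm x * norm y * \<bar>bf S1 S2 u w\<bar> \<le> norm x * norm y * M"
    by (simp add: mult_left_mono)
  then show ?thesis unfolding e by (simp add: abs_mult mult_ac)
qed

lemma lmeasurable_scale:
  assumes "S \<in> lmeasurable" "m \<noteq> 0"
  shows "(\<lambda>x. m *\<^sub>R x) ` (S::'a::euclidean_space set) \<in> lmeasurable"
proof -
  have s: "(\<lambda>x. m *\<^sub>R x) ` S = (*\<^sub>R) (1/m) -` S \<inter> space lebesgue"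
  proof (rule set_eqI)
    fix x
    have "x \<in> (\<lambda>x. m *\<^sub>R x) ` S \<longleftrightarrow> x /\<^sub>R m \<in> S"
    proof
      assume "x \<in> (\<lambda>x. m *\<^sub>R x) ` S" then show "x /\<^sub>R m \<in> S" using assms(2) by auto
    next
      assume "x /\<^sub>R m \<in> S"
      moreover have "x = m *\<^sub>R (x /\<^sub>R m)" using assms(2) by simp
      ultimately show "x \<in> (\<lambda>x. m *\<^sub>R x) ` S" by blast
    qed
    then show "x \<in> (\<lambda>x. m *\<^sub>R x) ` S \<longleftrightarrow> x \<in> (*\<^sub>R) (1/m) -` S \<inter> space lebesgue" by (simp add: divide_inverse_commute)
  qed
  have "(*\<^sub>R) (1/m) -` S \<inter> space lebesgue \<in> sets lebesgue"
    by (rule measurable_sets[OF lebesgue_measurable_scaling]) (use assms in auto)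
  moreover have "emeasure lebesgue ((\<lambda>x. m *\<^sub>R x) ` S) < \<infinity>"
  proof -
    have f: "emeasure lebesgue S < \<infinity>" using assms(1) unfolding fmeasurable_def by blast
    have e: "emeasure lebesgue ((\<lambda>x. m *\<^sub>R x) ` S) = ennreal (\<bar>m\<bar> ^ DIM('a)) * emeasure lebesgue S"
      using emeasure_lebesgue_affine[of m 0 S] by simp
    show ?thesis unfolding e infinity_ennreal_def using f[unfolded infinity_ennreal_def] ennreal_mult_less_top ennreal_less_top by metis
  qed
  ultimately show ?thesis unfolding fmeasurable_def s by auto
qed

lemma measure_scale:
  "measure lebesgue ((\<lambda>x. m *\<^sub>R x) ` (S::'a::euclidean_space set)) = \<bar>m\<bar> ^ DIM('a) * measure lebesgue S"
  using measure_lebesgue_affine[of m 0 S] by simp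

lemma measure_cball_eq:
  assumes "r \<ge> 0"
  shows "measure lebesgue (cball (c::'a::euclidean_space) r) = unit_ball_vol DIM('a) * r ^ DIM('a)"
  using content_cball[OF assms, of c] by (simp add: measure_completion)

lemma convex_sets_lebesgue:
  assumes "convex (S::'a::euclidean_space set)"
  shows "S \<in> sets lebesgue"
proof -
  have "S = (\<Union>n. S \<inter> cball 0 (real n))"
    by (auto simp: real_arch_simple)
  moreover have "S \<inter> cball 0 (real n) \<in> sets lebesgue" for n
    using measurable_convex[of "S \<inter> cball 0 (real n)"] assms
    by (auto simp: convex_Int fmeasurable_def)
  then have "(\<Union>n. S \<inter> cball 0 (real n)) \<in> sets lebesgue"
    by (intro sets.countable_UN) auto
  ultimately show ?thesis by simp
qed

lemma qf_cont:
  assumes "linear S1" "linear S2"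
  shows "continuous_on UNIV (qf S1 S2)"
proof -
  have "continuous_on UNIV S1" "continuous_on UNIV S2"
    using assms by (simp_all add: linear_continuous_on linear_conv_bounded_linear)
  then show ?thesis unfolding qf_def[abs_def] by (intro continuous_intros) auto
qed

lemma upper_diff:
  fixes S1 S2 :: "'a::euclidean_space \<Rightarrow> 'a"
  assumes lin: "linear S1" "linear S2" and R: "R > 0" and M: "M \<ge> 0"
    and E1: "E1 = {x. norm (S1 x) \<le> 1}" and E2: "E2 = {x. norm (S2 x) \<le> 1}"
    and E1R: "E1 \<subseteq> cball 0 R" and m1: "E1 \<in> lmeasurable" and m2: "E2 \<in> lmeasurable"
    and qb: "\<And>u. norm u = 1 \<Longrightarrow> \<bar>qf S1 S2 u\<bar> \<le> M"
  shows "measure lebesgue (E1 - E2) \<le> ((sqrt (1 + M * R\<^sup>2)) ^ DIM('a) - 1) * measure lebesgue E2"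
proof -
  define l where "l = sqrt (1 + M * R\<^sup>2)"
  have l1: "l \<ge> 1" unfolding l_def using M by simp
  have l2: "l\<^sup>2 = 1 + M * R\<^sup>2" unfolding l_def using M by simp
  have ns: "norm (S2 (x /\<^sub>R l)) = norm (S2 x) / l" for x
    using l1 linear_cmul[OF lin(2), of "inverse l" x] by (simp add: divide_inverse_commute)
  define L where "L = (\<lambda>x. l *\<^sub>R x) ` E2"
  have sub1: "E1 - E2 \<subseteq> L - E2"
  proof
    fix x assume x: "x \<in> E1 - E2"
    have nx: "norm x \<le> R" using x E1R by auto
    have "(norm (S2 x))\<^sup>2 = (norm (S1 x))\<^sup>2 - qf S1 S2 x" by (simp add: qf_def)
    also have "\<dots> \<le> 1 + M * (norm x)\<^sup>2"
    proof -
      have "(norm (S1 x))\<^sup>2 \<le> 1" using x E1 by (auto intro: power_le_one)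
      moreover have "- qf S1 S2 x \<le> M * (norm x)\<^sup>2" using qf_bound[OF lin qb, of x] by (simp add: abs_le_iff)
      ultimately show ?thesis by linarith
    qed
    also have "\<dots> \<le> 1 + M * R\<^sup>2" using nx M by (simp add: mult_left_mono power_mono)
    finally have "(norm (S2 x))\<^sup>2 \<le> l\<^sup>2" using l2 by simp
    then have "norm (S2 x) \<le> l" using l1 by (meson power2_le_imp_le order_trans zero_le_one)
    then have "norm (S2 (x /\<^sub>R l)) \<le> 1" using ns[of x] l1 by simp
    then have "x /\<^sub>R l \<in> E2" using E2 by simp
    moreover have "x = l *\<^sub>R (x /\<^sub>R l)" using l1 by simp
    ultimately show "x \<in> L - E2" using x unfolding L_def by blast
  qed
  have sub2: "E2 \<subseteq> L"
  proof
    fix x assume x: "x \<in> E2"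
    have "norm (S2 x) * 1 \<le> norm (S2 x) * l" using l1 by (intro mult_left_mono) auto
    then have "norm (S2 x) / l \<le> norm (S2 x)" using l1 by (simp add: divide_le_eq)
    then have "norm (S2 (x /\<^sub>R l)) \<le> norm (S2 x)" using ns[of x] by simp
    then have "x /\<^sub>R l \<in> E2" using x E2 by simp
    moreover have "x = l *\<^sub>R (x /\<^sub>R l)" using l1 by simp
    ultimately show "x \<in> L" unfolding L_def by blast
  qed
  have mL: "L \<in> lmeasurable" unfolding L_def using lmeasurable_scale[OF m2] l1 by simp
  have "measure lebesgue (E1 - E2) \<le> measure lebesgue (L - E2)"
    by (rule measure_mono_fmeasurable[OF sub1 sets.Diff[OF fmeasurableD[OF m1] fmeasurableD[OF m2]] fmeasurable_Diff[OF mL fmeasurableD[OF m2]]])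
  also have "\<dots> = measure lebesgue L - measure lebesgue E2"
    by (rule measurable_measure_Diff[OF mL fmeasurableD[OF m2] sub2])
  also have "measure lebesgue L = l ^ DIM('a) * measure lebesgue E2"
    unfolding L_def measure_scale using l1 by simp
  finally show ?thesis unfolding l_def by (simp add: algebra_simps)
qed

lemma lower_diff:
  fixes S1 S2 :: "'a::euclidean_space \<Rightarrow> 'a" and \<sigma> :: "'a set"
  assumes lin: "linear S1" "linear S2" and R: "R > 0" and dim: "DIM('a) \<ge> 2"
    and E1: "E1 = {x. norm (S1 x) \<le> 1}" and E2: "E2 = {x. norm (S2 x) \<le> 1}"
    and m1: "E1 \<in> lmeasurable" and m2: "E2 \<in> lmeasurable"
    and S1R: "\<And>x. norm (S1 x) \<le> R * norm x"
    and cone: "cone \<sigma>" and ms: "\<sigma> \<in> sets lebesgue"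
    and D: "cball y \<rho> \<subseteq> \<sigma> \<inter> cball 0 1" and rho: "\<rho> \<ge> 0"
    and k0: "\<kappa> \<ge> 0" and k1: "\<kappa> \<le> R\<^sup>2 / 2"
    and qD: "\<And>x. x \<in> cball y \<rho> \<Longrightarrow> qf S1 S2 x \<ge> \<kappa>"
  shows "measure lebesgue ((E2 - E1) \<inter> \<sigma>) \<ge> (\<kappa> / R\<^sup>2) * (unit_ball_vol DIM('a) * (\<rho> / R) ^ DIM('a))"
proof -
  define \<theta> where "\<theta> = 1 - \<kappa> / R\<^sup>2"
  have R2: "R\<^sup>2 > 0" using R by simp
  have th1: "\<theta> \<le> 1" "\<theta> \<ge> 1/2" unfolding \<theta>_def using k0 k1 R2 by (auto simp: field_simps)
  define \<mu> where "\<mu> = 1 / sqrt \<theta>"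
  have mu2: "\<mu>\<^sup>2 = 1 / \<theta>" unfolding \<mu>_def using th1 by (simp add: power_divide)
  have mu1: "\<mu> \<ge> 1" unfolding \<mu>_def using th1 by (simp add: real_sqrt_le_1_iff)
  define F where "F = {z. \<kappa> * (norm z)\<^sup>2 \<le> qf S1 S2 z}"
  define P where "P = E1 \<inter> \<sigma> \<inter> F"
  have closedF: "closed F" unfolding F_def
    by (intro closed_Collect_le continuous_intros qf_cont[OF lin]) 
  have mF: "F \<in> sets lebesgue"
    using closedF by (simp add: borel_closed)
  have mP: "P \<in> lmeasurable" unfolding P_def
    by (intro fmeasurable_Int_fmeasurable m1 ms mF)
  define Q where "Q = (\<lambda>x. \<mu> *\<^sub>R x) ` P"
  have mQ: "Q \<in> lmeasurable" unfolding Q_def using lmeasurable_scale[OF mP] mu1 by simp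
  have qscale: "qf S1 S2 (c *\<^sub>R z) = c\<^sup>2 * qf S1 S2 z" for c z by (rule qf_scale[OF lin])
  have n1scale: "norm (S1 (c *\<^sub>R z)) = \<bar>c\<bar> * norm (S1 z)" for c z using linear_cmul[OF lin(1)] by simp
  have n2scale: "norm (S2 (c *\<^sub>R z)) = \<bar>c\<bar> * norm (S2 z)" for c z using linear_cmul[OF lin(2)] by simp
  have Fscale: "c *\<^sub>R z \<in> F" if "z \<in> F" for c z
  proof -
    have "\<kappa> * (norm z)\<^sup>2 \<le> qf S1 S2 z" using that by (simp add: F_def)
    then have "c\<^sup>2 * (\<kappa> * (norm z)\<^sup>2) \<le> c\<^sup>2 * qf S1 S2 z" by (simp add: mult_left_mono)
    then show ?thesis by (simp add: F_def qscale power_mult_distrib mult_ac)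
  qed
  have coneI: "c *\<^sub>R z \<in> \<sigma>" if "z \<in> \<sigma>" "c \<ge> 0" for c z
    using cone that unfolding cone_def by blast
  have QE2: "Q \<subseteq> E2 \<inter> \<sigma> \<inter> F"
  proof
    fix w assume "w \<in> Q"
    then obtain z where z: "z \<in> P" "w = \<mu> *\<^sub>R z" unfolding Q_def by blast
    have a1: "(norm (S1 z))\<^sup>2 \<le> 1" using z E1 unfolding P_def by (auto intro: power_le_one)
    have a1R: "(norm (S1 z))\<^sup>2 \<le> R\<^sup>2 * (norm z)\<^sup>2"
      using S1R[of z] by (metis norm_ge_zero power_mono power_mult_distrib)
    have Fz: "\<kappa> * (norm z)\<^sup>2 \<le> qf S1 S2 z" using z unfolding P_def F_def by blast
    have "\<kappa> * (norm (S1 z))\<^sup>2 \<le> \<kappa> * (R\<^sup>2 * (norm z)\<^sup>2)" using a1R k0 by (rule mult_left_mono)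
    then have "(\<kappa> / R\<^sup>2) * (norm (S1 z))\<^sup>2 \<le> \<kappa> * (norm z)\<^sup>2" using R2 by (simp add: field_simps)
    then have "(norm (S2 z))\<^sup>2 \<le> \<theta> * (norm (S1 z))\<^sup>2"
      using Fz unfolding \<theta>_def qf_def by (simp add: algebra_simps)
    also have "\<dots> \<le> \<theta>" using a1 th1 by (simp add: mult_left_le)
    finally have "\<mu>\<^sup>2 * (norm (S2 z))\<^sup>2 \<le> \<mu>\<^sup>2 * \<theta>" by (simp add: mult_left_mono)
    also have "\<dots> = 1" using mu2 th1 by simp
    finally have "(norm (S2 w))\<^sup>2 \<le> 1" using z(2) n2scale mu1 by (simp add: power_mult_distrib)
    then have "norm (S2 w) \<le> 1" by (simp add: power_le_one_iff)
    then show "w \<in> E2 \<inter> \<sigma> \<inter> F"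
      using z coneI[of z \<mu>] Fscale[of z \<mu>] mu1 E2 unfolding P_def by auto
  qed
  have PQ: "P \<subseteq> Q"
  proof
    fix z assume z: "z \<in> P"
    have "norm (S1 (z /\<^sub>R \<mu>)) = norm (S1 z) / \<mu>" using n1scale[of "inverse \<mu>" z] mu1
      by (simp add: divide_inverse_commute)
    also have "\<dots> \<le> norm (S1 z)" using mu1 by (simp add: divide_le_eq mult_le_cancel_left1)
    also have "\<dots> \<le> 1" using z E1 unfolding P_def by auto
    finally have "z /\<^sub>R \<mu> \<in> E1" using E1 by simp
    moreover have "z /\<^sub>R \<mu> \<in> \<sigma>" using coneI[of z "inverse \<mu>"] z mu1 unfolding P_def by auto
    moreover have "z /\<^sub>R \<mu> \<in> F" using Fscale[of z "inverse \<mu>"] z unfolding P_def by auto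
    ultimately have "z /\<^sub>R \<mu> \<in> P" unfolding P_def by blast
    moreover have "z = \<mu> *\<^sub>R (z /\<^sub>R \<mu>)" using mu1 by simp
    ultimately show "z \<in> Q" unfolding Q_def by blast
  qed
  have QP: "Q - P \<subseteq> (E2 - E1) \<inter> \<sigma>" using QE2 unfolding P_def by blast
  have ballP: "cball (y /\<^sub>R R) (\<rho> / R) \<subseteq> P"
  proof
    fix z assume z: "z \<in> cball (y /\<^sub>R R) (\<rho> / R)"
    define x where "x = R *\<^sub>R z"
    have zx: "z = (1/R) *\<^sub>R x" unfolding x_def using R by simp
    have xy: "x - y = R *\<^sub>R (z - y /\<^sub>R R)" unfolding x_def using R by (simp add: scaleR_diff_right)
    have "dist y x = R * dist (y /\<^sub>R R) z" using R unfolding dist_norm norm_minus_commute[of y x] norm_minus_commute[of "y /\<^sub>R R" z] xy by simp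
    then have xD: "x \<in> cball y \<rho>" using z R by (simp add: field_simps)
    then have xs: "x \<in> \<sigma>" and x1: "norm x \<le> 1" using D by auto
    have "norm (S1 z) \<le> R * norm z" by (rule S1R)
    also have "\<dots> = norm x" unfolding x_def using R by simp
    finally have "z \<in> E1" using x1 E1 by simp
    moreover have "z \<in> \<sigma>" using coneI[OF xs, of "1/R"] R zx by simp
    moreover have "z \<in> F"
    proof -
      have "(norm x)\<^sup>2 \<le> 1" using x1 by (simp add: power_le_one)
      then have "\<kappa> * (norm x)\<^sup>2 \<le> \<kappa>" using k0 by (simp add: mult_left_le)
      also have "\<dots> \<le> qf S1 S2 x" using qD[OF xD] .
      finally have ineq: "(1/R)\<^sup>2 * (\<kappa> * (norm x)\<^sup>2) \<le> (1/R)\<^sup>2 * qf S1 S2 x" by (simp add: mult_left_mono)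
      have e1: "\<kappa> * (norm z)\<^sup>2 = (1/R)\<^sup>2 * (\<kappa> * (norm x)\<^sup>2)" using zx R by (simp add: power_mult_distrib power_divide)
      have e2: "qf S1 S2 z = (1/R)\<^sup>2 * qf S1 S2 x" using zx qscale[of "1/R" x] by simp
      show ?thesis unfolding F_def mem_Collect_eq e1 e2 by (rule ineq)
    qed
    ultimately show "z \<in> P" unfolding P_def by blast
  qed
  have mball: "measure lebesgue P \<ge> unit_ball_vol DIM('a) * (\<rho> / R) ^ DIM('a)"
    using measure_mono_fmeasurable[OF ballP _ mP] measure_cball_eq[of "\<rho>/R" "y /\<^sub>R R"] rho R
    by (simp add: fmeasurableD lmeasurable_cball)
  have "measure lebesgue (Q - P) = measure lebesgue Q - measure lebesgue P"
    by (rule measurable_measure_Diff[OF mQ fmeasurableD[OF mP] PQ])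
  also have "measure lebesgue Q = \<mu> ^ DIM('a) * measure lebesgue P"
    unfolding Q_def measure_scale using mu1 by simp
  finally have eqd: "measure lebesgue (Q - P) = (\<mu> ^ DIM('a) - 1) * measure lebesgue P"
    by (simp add: algebra_simps)
  have "\<mu>\<^sup>2 \<le> \<mu> ^ DIM('a)" using mu1 dim by (intro power_increasing) auto
  moreover have "\<kappa> / R\<^sup>2 \<le> \<mu>\<^sup>2 - 1"
  proof -
    have "1 - \<theta> \<le> (1 - \<theta>) / \<theta>" using th1 by (simp add: le_divide_eq mult_left_le)
    moreover have "1 / \<theta> - 1 = (1 - \<theta>) / \<theta>" using th1 by (simp add: field_simps)
    moreover have "1 - \<theta> = \<kappa> / R\<^sup>2" unfolding \<theta>_def by simp
    ultimately show ?thesis unfolding mu2 by simp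
  qed
  ultimately have fac: "\<kappa> / R\<^sup>2 \<le> \<mu> ^ DIM('a) - 1" by linarith
  have mP0: "measure lebesgue P \<ge> 0" by simp
  have "(\<kappa> / R\<^sup>2) * (unit_ball_vol DIM('a) * (\<rho> / R) ^ DIM('a)) \<le> (\<kappa> / R\<^sup>2) * measure lebesgue P"
    using mball k0 R2 by (intro mult_left_mono) auto
  also have "\<dots> \<le> (\<mu> ^ DIM('a) - 1) * measure lebesgue P"
    using fac mP0 by (rule mult_right_mono)
  also have "\<dots> = measure lebesgue (Q - P)" using eqd by simp
  also have "\<dots> \<le> measure lebesgue ((E2 - E1) \<inter> \<sigma>)"
    by (rule measure_mono_fmeasurable[OF QP fmeasurableD[OF fmeasurable_Diff[OF mQ fmeasurableD[OF mP]]] fmeasurable_Int_fmeasurable[OF fmeasurable_Diff[OF m2 fmeasurableD[OF m1]] ms]])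
  finally show ?thesis .
qed

lemma bern_up:
  fixes h :: real assumes "h \<ge> 0"
  shows "(1 + h) ^ n - 1 \<le> real n * h * (1 + h) ^ n"
proof (induction n)
  case 0 then show ?case by simp
next
  case (Suc n)
  have p1: "(1 + h) ^ n \<le> (1 + h) ^ Suc n" using assms by (simp add: power_increasing)
  have "(1 + h) ^ Suc n - 1 = (1 + h) * ((1 + h) ^ n - 1) + h" by (simp add: algebra_simps)
  also have "\<dots> \<le> (1 + h) * (real n * h * (1 + h) ^ n) + h"
    using Suc assms by (simp add: mult_left_mono)
  also have "\<dots> = real n * h * (1 + h) ^ Suc n + h" by (simp add: algebra_simps)
  also have "h \<le> h * (1 + h) ^ Suc n"
  proof -
    have "1 \<le> (1 + h) ^ Suc n" using assms by (intro one_le_power) auto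
    then show ?thesis using assms by (simp add: mult_le_cancel_left1)
  qed
  then have "real n * h * (1 + h) ^ Suc n + h \<le> real (Suc n) * h * (1 + h) ^ Suc n"
    by (simp add: algebra_simps)
  finally show ?case .
qed

lemma sqrt_pow_bound:
  fixes M R :: real
  assumes "M \<ge> 0" "M \<le> R\<^sup>2"
  shows "(sqrt (1 + M * R\<^sup>2)) ^ n - 1 \<le> real n * R\<^sup>2 * (1 + R ^ 4) ^ n * M"
proof -
  define h where "h = M * R\<^sup>2"
  have h0: "h \<ge> 0" unfolding h_def using assms by simp
  have hR: "h \<le> R ^ 4" unfolding h_def using assms
    by (metis mult_right_mono zero_le_power2 power2_eq_square power4_eq_xxxx mult.assoc)
  define l where "l = sqrt (1 + h)"
  have l1: "l \<ge> 1" unfolding l_def using h0 by simp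
  have "l ^ n \<le> l ^ (2 * n)" using l1 by (intro power_increasing) auto
  also have "\<dots> = (1 + h) ^ n" unfolding l_def power_mult using h0 by simp
  finally have "l ^ n - 1 \<le> (1 + h) ^ n - 1" by simp
  also have "\<dots> \<le> real n * h * (1 + h) ^ n" by (rule bern_up[OF h0])
  also have "\<dots> \<le> real n * h * (1 + R ^ 4) ^ n"
    using h0 hR by (intro mult_left_mono power_mono) auto
  finally show ?thesis unfolding l_def h_def by (simp add: mult_ac)
qed

lemma ell_norm_bound:
  fixes S :: "'a::euclidean_space \<Rightarrow> 'a"
  assumes "linear S" "R > 0" "cball 0 (1/R) \<subseteq> {x. norm (S x) \<le> 1}"
  shows "norm (S x) \<le> R * norm x"
proof (cases "x = 0")
  case True then show ?thesis using assms(1) by (simp add: linear_0)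
next
  case False
  define z where "z = (1 / (R * norm x)) *\<^sub>R x"
  have "norm z = 1 / R" unfolding z_def using False assms(2) by simp
  then have "z \<in> cball 0 (1/R)" by simp
  then have "norm (S z) \<le> 1" using assms(3) by blast
  moreover have "norm (S z) = norm (S x) / (R * norm x)"
    unfolding z_def using linear_cmul[OF assms(1)] False assms(2) by simp
  ultimately show ?thesis using False assms(2) by (simp add: divide_le_eq mult_ac)
qed

lemma ell_lmeasurable:
  fixes S :: "'a::euclidean_space \<Rightarrow> 'a"
  assumes "linear S" "{x. norm (S x) \<le> 1} \<subseteq> cball 0 R"
  shows "{x. norm (S x) \<le> 1} \<in> lmeasurable"
proof -
  have "continuous_on UNIV S" using assms(1) by (simp add: linear_continuous_on linear_conv_bounded_linear)
  then have "closed {x. norm (S x) \<le> 1}"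
    by (intro closed_Collect_le continuous_intros) auto
  moreover have "bounded {x. norm (S x) \<le> 1}" using assms(2) bounded_cball bounded_subset by blast
  ultimately show ?thesis by (intro lmeasurable_compact) (simp add: compact_eq_bounded_closed)
qed

lemma qf_swap: "qf S2 S1 x = - qf S1 S2 x"
  by (simp add: qf_def)

lemma bf_swap: "bf S2 S1 x y = - bf S1 S2 x y"
  by (simp add: bf_def)

lemma core:
  fixes S1 S2 :: "'a::euclidean_space \<Rightarrow> 'a" and \<sigma> :: "'a set" and R s :: real
  assumes dim: "DIM('a) \<ge> 2" and R: "R > 1" and s0: "0 < s" and s1: "s < 1/2"
    and lin: "linear S1" "linear S2"
    and E1: "E1 = {x. norm (S1 x) \<le> 1}" and E2: "E2 = {x. norm (S2 x) \<le> 1}"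
    and cc: "convex_cone \<sigma>" and inr: "inradius (\<sigma> \<inter> cball 0 1) \<ge> s"
    and b1: "cball 0 (1/R) \<subseteq> E1" "E1 \<subseteq> cball 0 R"
    and b2: "cball 0 (1/R) \<subseteq> E2" "E2 \<subseteq> cball 0 R"
  shows "measure lebesgue (symdiff E1 E2) \<le>
    (2 * (real DIM('a) * R\<^sup>2 * (1 + R ^ 4) ^ DIM('a)) * (unit_ball_vol DIM('a) * R ^ DIM('a)) /
      (((s/2)\<^sup>2 / 16) / R\<^sup>2 * (unit_ball_vol DIM('a) * (((s/2)\<^sup>2 / 64) / R) ^ DIM('a))) + 1)
    * measure lebesgue (symdiff E1 E2 \<inter> \<sigma>)"
proof -
  define n where "n = DIM('a)"
  define t where "t = s / 2"
  define h where "h = t / 2"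
  define \<rho> where "\<rho> = t\<^sup>2 / 64"
  define W where "W = unit_ball_vol n * R ^ n"
  define V where "V = unit_ball_vol n * (\<rho> / R) ^ n"
  define K0 where "K0 = 2 * (real n * R\<^sup>2 * (1 + R ^ 4) ^ n) * W"
  define c0 where "c0 = (t\<^sup>2 / 16) / R\<^sup>2 * V"
  have t0: "t > 0" "t < 1/4" unfolding t_def using s0 s1 by auto
  have R0: "R > 0" using R by simp
  have V0: "V > 0" unfolding V_def \<rho>_def using t0 R0 by simp
  have c00: "c0 > 0" unfolding c0_def using V0 t0 R0 by simp
  have K00: "K0 \<ge> 0" unfolding K0_def W_def using R0 by simp
  have conv: "convex \<sigma>" and cone: "cone \<sigma>" and z\<sigma>: "0 \<in> \<sigma>"
    using cc convex_cone_contains_0[OF cc] unfolding convex_cone_def conic_def cone_def by auto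
  have ms: "\<sigma> \<in> sets lebesgue" by (rule convex_sets_lebesgue[OF conv])
  have m1: "E1 \<in> lmeasurable" using ell_lmeasurable[OF lin(1)] b1 E1 by simp
  have m2: "E2 \<in> lmeasurable" using ell_lmeasurable[OF lin(2)] b2 E2 by simp
  have S1R: "norm (S1 x) \<le> R * norm x" for x using ell_norm_bound[OF lin(1) R0] b1 E1 by simp
  have S2R: "norm (S2 x) \<le> R * norm x" for x using ell_norm_bound[OF lin(2) R0] b2 E2 by simp
  obtain v :: 'a where v: "norm v = 1" "\<And>u. norm u = 1 \<Longrightarrow> \<bar>qf S1 S2 u\<bar> \<le> \<bar>qf S1 S2 v\<bar>"
  proof -
    have "sphere (0::'a) 1 \<noteq> {}" by simp
    moreover have "continuous_on (sphere 0 1) (\<lambda>u. \<bar>qf S1 S2 u\<bar>)"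
      using qf_cont[OF lin] by (intro continuous_intros) (auto intro: continuous_on_subset)
    ultimately obtain v where "v \<in> sphere (0::'a) 1" "\<forall>u\<in>sphere 0 1. \<bar>qf S1 S2 u\<bar> \<le> \<bar>qf S1 S2 v\<bar>"
      using continuous_attains_sup[OF compact_sphere] by blast
    then show ?thesis using that by auto
  qed
  define M where "M = \<bar>qf S1 S2 v\<bar>"
  have M0: "M \<ge> 0" unfolding M_def by simp
  have qb: "\<And>u. norm u = 1 \<Longrightarrow> \<bar>qf S1 S2 u\<bar> \<le> M" unfolding M_def using v(2) .
  have qb': "\<And>u. norm u = 1 \<Longrightarrow> \<bar>qf S2 S1 u\<bar> \<le> M" using qb unfolding qf_swap[of S2 S1] abs_minus_cancel .
  have MR: "M \<le> R\<^sup>2"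
  proof -
    have "(norm (S1 v))\<^sup>2 \<le> R\<^sup>2" "(norm (S2 v))\<^sup>2 \<le> R\<^sup>2"
      using S1R[of v] S2R[of v] v(1) by (auto intro: power_mono)
    moreover have "(norm (S1 v))\<^sup>2 \<ge> 0" "(norm (S2 v))\<^sup>2 \<ge> 0" by simp_all
    ultimately show ?thesis unfolding M_def qf_def by (simp only: abs_le_iff) linarith
  qed
  have cW: "measure lebesgue (cball (0::'a) R) = W" using measure_cball_eq[of R 0] R0 unfolding W_def n_def by simp
  have mW: "measure lebesgue E1 \<le> W" "measure lebesgue E2 \<le> W"
    using measure_mono_fmeasurable[OF b1(2) fmeasurableD[OF m1] lmeasurable_cball]
      measure_mono_fmeasurable[OF b2(2) fmeasurableD[OF m2] lmeasurable_cball] unfolding cW by auto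
  have pb: "(sqrt (1 + M * R\<^sup>2)) ^ n - 1 \<le> real n * R\<^sup>2 * (1 + R ^ 4) ^ n * M"
    by (rule sqrt_pow_bound[OF M0 MR])
  have pb0: "(sqrt (1 + M * R\<^sup>2)) ^ n - 1 \<ge> 0" using M0 R0 by (simp add: one_le_power)
  have u1: "measure lebesgue (E1 - E2) \<le> ((sqrt (1 + M * R\<^sup>2)) ^ n - 1) * measure lebesgue E2"
    unfolding n_def by (rule upper_diff[OF lin R0 M0 E1 E2 b1(2) m1 m2 qb])
  have u2: "measure lebesgue (E2 - E1) \<le> ((sqrt (1 + M * R\<^sup>2)) ^ n - 1) * measure lebesgue E1"
    unfolding n_def by (rule upper_diff[OF lin(2,1) R0 M0 E2 E1 b2(2) m2 m1 qb'])
  have "((sqrt (1 + M * R\<^sup>2)) ^ n - 1) * measure lebesgue E2 \<le> ((sqrt (1 + M * R\<^sup>2)) ^ n - 1) * W"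
    using mW pb0 by (intro mult_left_mono) auto
  moreover have "((sqrt (1 + M * R\<^sup>2)) ^ n - 1) * measure lebesgue E1 \<le> ((sqrt (1 + M * R\<^sup>2)) ^ n - 1) * W"
    using mW pb0 by (intro mult_left_mono) auto
  moreover have "((sqrt (1 + M * R\<^sup>2)) ^ n - 1) * W \<le> (real n * R\<^sup>2 * (1 + R ^ 4) ^ n * M) * W"
    using pb W_def R0 by (intro mult_right_mono) auto
  moreover have "measure lebesgue (symdiff E1 E2) \<le> measure lebesgue (E1 - E2) + measure lebesgue (E2 - E1)"
    unfolding symdiff_def
    by (rule measure_Un_le) (auto intro: sets.Diff fmeasurableD m1 m2)
  ultimately have upper: "measure lebesgue (symdiff E1 E2) \<le> K0 * M"
    using u1 u2 unfolding K0_def by (simp add: algebra_simps)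
  define A where "A = {r. 0 \<le> r \<and> (\<exists>x. cball x r \<subseteq> \<sigma> \<inter> cball 0 1)}"
  have A0: "0 \<in> A" unfolding A_def using z\<sigma> by (intro CollectI conjI exI[of _ 0]) auto
  have Abdd: "bdd_above A"
  proof (rule bdd_aboveI[of _ 1])
    fix r assume "r \<in> A"
    then obtain x :: 'a where r0: "r \<ge> 0" and x: "cball x r \<subseteq> cball (0::'a) 1" unfolding A_def by auto
    obtain e :: 'a where e: "norm e = 1" using vector_choose_size[of 1] by auto
    have p1: "x + r *\<^sub>R e \<in> cball x r" using e r0 by (simp add: dist_norm)
    have p2: "x - r *\<^sub>R e \<in> cball x r" using e r0 by (simp add: dist_norm)
    have "norm (x + r *\<^sub>R e) \<le> 1" "norm (x - r *\<^sub>R e) \<le> 1"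
      using subsetD[OF x p1] subsetD[OF x p2] by simp_all
    moreover have "2 * r = norm ((x + r *\<^sub>R e) - (x - r *\<^sub>R e))"
    proof -
      have "(x + r *\<^sub>R e) - (x - r *\<^sub>R e) = (r + r) *\<^sub>R e" unfolding scaleR_add_left by simp
      then show ?thesis using e r0 by simp
    qed
    moreover have "norm ((x + r *\<^sub>R e) - (x - r *\<^sub>R e)) \<le> norm (x + r *\<^sub>R e) + norm (x - r *\<^sub>R e)"
      by (rule norm_triangle_ineq4)
    ultimately show "r \<le> 1" by linarith
  qed
  have "t < Sup A" using inr t0 s0 unfolding inradius_def A_def t_def by simp
  then obtain r where rA: "r \<in> A" and tr: "t < r" using less_cSup_iff[of A t] A0 Abdd by blast
  from rA obtain x0 :: 'a where x0r: "cball x0 r \<subseteq> \<sigma> \<inter> cball 0 1" unfolding A_def by blast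
  have x0: "cball x0 t \<subseteq> \<sigma> \<inter> cball 0 1"
    using subset_cball[of t r x0] tr x0r by auto
  have q0: "qf S1 S2 0 = 0" using lin by (simp add: qf_def linear_0)
  have qh: "qf S1 S2 (h *\<^sub>R v) = h\<^sup>2 * qf S1 S2 v" by (rule qf_scale[OF lin])
  have bh: "bf S1 S2 x0 (h *\<^sub>R v) = h * bf S1 S2 x0 v" using bf_scale[OF lin, of 1 x0 h v] by simp
  have sum3: "qf S1 S2 (x0 + h *\<^sub>R v) + qf S1 S2 (x0 - h *\<^sub>R v) - 2 * qf S1 S2 x0 = 2 * h\<^sup>2 * qf S1 S2 v"
    using qf_add[OF lin, of x0 "h *\<^sub>R v"] qf_diff[OF lin, of x0 "h *\<^sub>R v"] qh bh by simp
  have "\<exists>y \<in> {x0 + h *\<^sub>R v, x0 - h *\<^sub>R v, x0}. \<bar>qf S1 S2 y\<bar> \<ge> h\<^sup>2 * M / 2"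
  proof (rule ccontr)
    assume "\<not> ?thesis"
    then have "\<bar>qf S1 S2 (x0 + h *\<^sub>R v)\<bar> < h\<^sup>2 * M / 2" "\<bar>qf S1 S2 (x0 - h *\<^sub>R v)\<bar> < h\<^sup>2 * M / 2"
      "\<bar>qf S1 S2 x0\<bar> < h\<^sup>2 * M / 2" by auto
    moreover have "\<bar>2 * h\<^sup>2 * qf S1 S2 v\<bar> = 2 * h\<^sup>2 * M" unfolding M_def by (simp add: abs_mult)
    ultimately show False using sum3 by linarith
  qed
  then obtain y where yin: "y \<in> {x0 + h *\<^sub>R v, x0 - h *\<^sub>R v, x0}" and yq: "\<bar>qf S1 S2 y\<bar> \<ge> h\<^sup>2 * M / 2"
    by blast
  have h0: "h \<ge> 0" unfolding h_def using t0 by simp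
  have nhv: "norm (h *\<^sub>R v) = h" using v(1) h0 by simp
  have ydist: "dist x0 y \<le> h"
    using yin nhv h0 by (auto simp: dist_norm)
  have tt: "t * t \<le> t" using t0 by (intro mult_left_le) auto
  have ht: "h + \<rho> \<le> t" unfolding h_def \<rho>_def power2_eq_square using tt t0 by linarith
  have ysub: "cball y \<rho> \<subseteq> \<sigma> \<inter> cball 0 1"
  proof -
    have "cball y \<rho> \<subseteq> cball x0 t"
    proof
      fix z assume "z \<in> cball y \<rho>"
      then have "dist y z \<le> \<rho>" by simp
      then have "dist x0 z \<le> t" using dist_triangle[of x0 z y] ydist ht by linarith
      then show "z \<in> cball x0 t" by simp
    qed
    then show ?thesis using x0 by blast
  qed
  have rho0: "\<rho> \<ge> 0" unfolding \<rho>_def by simp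
  have r1: "\<rho> \<le> 1" using ht h0 t0 by linarith
  have "y \<in> cball y \<rho>" using rho0 by simp
  then have ny: "norm y \<le> 1" using ysub by (meson IntD2 mem_cball_0 subsetD)
  note y = yq
  have close: "\<bar>qf S1 S2 x - qf S1 S2 y\<bar> \<le> 3 * M * \<rho>" if "x \<in> cball y \<rho>" for x
  proof -
    define d where "d = x - y"
    have nd: "norm d \<le> \<rho>" using that unfolding d_def by (simp add: dist_norm norm_minus_commute)
    have "qf S1 S2 x = qf S1 S2 y + 2 * bf S1 S2 y d + qf S1 S2 d"
      unfolding d_def using qf_add[OF lin, of y "x - y"] by simp
    moreover have "\<bar>bf S1 S2 y d\<bar> \<le> M * \<rho>"
    proof -
      have "\<bar>bf S1 S2 y d\<bar> \<le> M * norm y * norm d" by (rule bf_bound[OF lin qb])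
      also have "\<dots> \<le> M * 1 * \<rho>" using ny nd M0 by (intro mult_mono) (auto intro: mult_left_mono)
      finally show ?thesis by simp
    qed
    moreover have "\<bar>qf S1 S2 d\<bar> \<le> M * \<rho>"
    proof -
      have "\<bar>qf S1 S2 d\<bar> \<le> M * (norm d)\<^sup>2" by (rule qf_bound[OF lin qb])
      also have "(norm d)\<^sup>2 \<le> \<rho>"
      proof -
        have "norm d * norm d \<le> norm d * 1" using nd r1 by (intro mult_left_mono) auto
        then show ?thesis using nd unfolding power2_eq_square by linarith
      qed
      then have "M * (norm d)\<^sup>2 \<le> M * \<rho>" using M0 by (rule mult_left_mono)
      finally show ?thesis .
    qed
    ultimately show ?thesis by linarith
  qed
  define \<kappa> where "\<kappa> = M * (t\<^sup>2 / 16)"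
  have k0: "\<kappa> \<ge> 0" unfolding \<kappa>_def using M0 by simp
  have k1: "\<kappa> \<le> R\<^sup>2 / 2"
  proof -
    have "t\<^sup>2 / 16 \<le> 1/2" using tt t0 unfolding power2_eq_square by linarith
    then have "M * (t\<^sup>2 / 16) \<le> R\<^sup>2 * (1/2)" using MR M0 by (intro mult_mono) auto
    then show ?thesis unfolding \<kappa>_def by simp
  qed
  have gap: "h\<^sup>2 * M / 2 - 3 * M * \<rho> \<ge> \<kappa>"
    unfolding h_def \<rho>_def \<kappa>_def using M0 by (simp add: power2_eq_square field_simps)
  have lowercase: "measure lebesgue (symdiff E1 E2 \<inter> \<sigma>) \<ge> c0 * M"
  proof -
    have fs: "symdiff E1 E2 \<inter> \<sigma> \<in> fmeasurable lebesgue" unfolding symdiff_def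
      by (intro fmeasurable_Int_fmeasurable ms fmeasurable.Un fmeasurable_Diff m1 m2 fmeasurableD)
    have c0M: "c0 * M = (\<kappa> / R\<^sup>2) * (unit_ball_vol DIM('a) * (\<rho> / R) ^ DIM('a))"
      unfolding c0_def V_def \<kappa>_def n_def by (simp add: field_simps)
    show ?thesis
    proof (cases "qf S1 S2 y \<ge> 0")
      case True
      have "\<And>x. x \<in> cball y \<rho> \<Longrightarrow> qf S1 S2 x \<ge> \<kappa>" using close yq True gap by fastforce
      from lower_diff[OF lin R0 dim E1 E2 m1 m2 S1R cone ms ysub rho0 k0 k1 this]
      have "c0 * M \<le> measure lebesgue ((E2 - E1) \<inter> \<sigma>)" unfolding c0M .
      also have "\<dots> \<le> measure lebesgue (symdiff E1 E2 \<inter> \<sigma>)"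
        by (rule measure_mono_fmeasurable[OF _ sets.Int[OF sets.Diff[OF fmeasurableD[OF m2] fmeasurableD[OF m1]] ms] fs]) (auto simp: symdiff_def)
      finally show ?thesis .
    next
      case False
      have "\<And>x. x \<in> cball y \<rho> \<Longrightarrow> qf S2 S1 x \<ge> \<kappa>" using close yq False gap by (fastforce simp: qf_swap[of S2 S1])
      from lower_diff[OF lin(2,1) R0 dim E2 E1 m2 m1 S2R cone ms ysub rho0 k0 k1 this]
      have "c0 * M \<le> measure lebesgue ((E1 - E2) \<inter> \<sigma>)" unfolding c0M .
      also have "\<dots> \<le> measure lebesgue (symdiff E1 E2 \<inter> \<sigma>)"
        by (rule measure_mono_fmeasurable[OF _ sets.Int[OF sets.Diff[OF fmeasurableD[OF m1] fmeasurableD[OF m2]] ms] fs]) (auto simp: symdiff_def)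
      finally show ?thesis .
    qed
  qed
  have "measure lebesgue (symdiff E1 E2) \<le> K0 * M" by (rule upper)
  also have "\<dots> = (K0 / c0) * (c0 * M)" using c00 by simp
  also have "\<dots> \<le> (K0 / c0) * measure lebesgue (symdiff E1 E2 \<inter> \<sigma>)"
    using lowercase K00 c00 by (intro mult_left_mono) auto
  also have "\<dots> \<le> (K0 / c0 + 1) * measure lebesgue (symdiff E1 E2 \<inter> \<sigma>)"
    by (intro mult_right_mono) auto
  finally show ?thesis unfolding K0_def c0_def V_def W_def n_def t_def \<rho>_def .
qed

theorem mainTheorem11:
  fixes R s :: real
  assumes "DIM('a::euclidean_space) \<ge> 2" and "R > 1" and "0 < s" and "s < 1/2"
  shows "\<exists>\<delta> C. \<delta> > 0 \<and> C > 0 \<and>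
    (\<forall>(\<sigma>::'a set) E1 E2. convex_cone \<sigma> \<and> inradius (\<sigma> \<inter> cball 0 1) \<ge> s \<and>
       sym_ellipsoid E1 \<and> sym_ellipsoid E2 \<and>
       cball 0 (1/R) \<subseteq> E1 \<and> E1 \<subseteq> cball 0 R \<and>
       cball 0 (1/R) \<subseteq> E2 \<and> E2 \<subseteq> cball 0 R \<and>
       measure lebesgue (symdiff E1 E2 \<inter> \<sigma>) \<le> \<delta>
     \<longrightarrow> measure lebesgue (symdiff E1 E2) \<le> C * measure lebesgue (symdiff E1 E2 \<inter> \<sigma>))"
proof -
  define C where "C = (2 * (real DIM('a) * R\<^sup>2 * (1 + R ^ 4) ^ DIM('a)) * (unit_ball_vol DIM('a) * R ^ DIM('a)) /
      (((s/2)\<^sup>2 / 16) / R\<^sup>2 * (unit_ball_vol DIM('a) * (((s/2)\<^sup>2 / 64) / R) ^ DIM('a))) + 1)"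
  have "0 \<le> (2 * (real DIM('a) * R\<^sup>2 * (1 + R ^ 4) ^ DIM('a)) * (unit_ball_vol DIM('a) * R ^ DIM('a)) /
      (((s/2)\<^sup>2 / 16) / R\<^sup>2 * (unit_ball_vol DIM('a) * (((s/2)\<^sup>2 / 64) / R) ^ DIM('a))))"
    using assms(2,3) by (intro divide_nonneg_nonneg mult_nonneg_nonneg) auto
  then have C0: "C > 0" unfolding C_def by linarith
  have main: "measure lebesgue (symdiff E1 E2) \<le> C * measure lebesgue (symdiff E1 E2 \<inter> \<sigma>)"
    if h: "convex_cone \<sigma>" "inradius (\<sigma> \<inter> cball 0 1) \<ge> s"
       "sym_ellipsoid E1" "sym_ellipsoid E2"
       "cball 0 (1/R) \<subseteq> E1" "E1 \<subseteq> cball 0 R"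
       "cball 0 (1/R) \<subseteq> E2" "E2 \<subseteq> cball 0 R" for \<sigma> E1 E2 :: "'a set"
  proof -
    obtain S1 :: "'a \<Rightarrow> 'a" where S1: "linear S1" "E1 = {x. norm (S1 x) \<le> 1}" using ell_repr[OF h(3)] by blast
    obtain S2 :: "'a \<Rightarrow> 'a" where S2: "linear S2" "E2 = {x. norm (S2 x) \<le> 1}" using ell_repr[OF h(4)] by blast
    show ?thesis unfolding C_def
      by (rule core[OF assms S1(1) S2(1) S1(2) S2(2) h(1,2) h(5,6) h(7,8)])
  qed
  show ?thesis
    by (rule exI[of _ 1], rule exI[of _ C]) (use C0 main in auto)
qed

end
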